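(* Let $C$ be a kernel configuration, $\mathbb V$ a $K$-vector space and $\theta:\mathbb V\to\mathbb V$ a $C$-endomorphism which is $C$-image-complete, and let $F\subseteq K[X]_{\mathrm{irr}}^{0<C<\infty}$ be finite. Then: (1) $\mathrm{Im}(\eta)=\mathrm{Im}(F^C)$ for every $\eta\in K[X]$ with $F^C\mid\eta$ and all monic irreducible factors of $\eta$ lying in $K[X]_{\mathrm{irr}}^{C=0}\cup F$; (2) $\mathbb V=\mathrm{Im}(F^C)\oplus\mathrm{Ker}(F^C)=\mathrm{Im}(F^C)\oplus\bigoplus_{f\in F}\mathrm{Ker}(f^{C(f)})$; (3) $\mathrm{Im}(F^C)=\mathrm{Im}(F'^C)\oplus\bigoplus_{f\in F'\setminus F}\mathrm{Ker}(f^{C(f)})$ for every finite $F'$ with $F\subseteq F'\subseteq K[X]_{\mathrm{irr}}^{0<C<\infty}$; (4) $\mathrm{Im}(g^{C(g)})=\mathrm{Im}(F^C)\oplus\bigoplus_{f\in F\setminus\{g\}}\mathrm{Ker}(f^{C(f)})$ for every $g\in F$.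
   Context: $K$ is a field, $K[X]_{\mathrm{irr}}$ the set of monic irreducible polynomials of $K[X]$. For $\rho=\sum_i(\rho)_iX^i$, $\rho[\theta]=\sum_i(\rho)_i\theta^i$; $\mathrm{Ker}(\rho),\mathrm{Im}(\rho)$ are kernel and image of $\rho[\theta]$. A kernel configuration is $C=(c,d)$ with $c:K[X]_{\mathrm{irr}}\to\mathbb N\cup\{\infty\}$, $d\in\mathbb N_{>0}\cup\{\infty\}$, $d=\infty$ or $d=\sum_f\deg(f)c(f)$; $C(f)=c(f)$. $C$ is algebraic if $d<\infty$ (with $\mathrm{MiPo}(C)=\prod_ff^{C(f)}$), transcendental otherwise. $\theta$ is a $C$-endomorphism if $\mathrm{MiPo}(C)[\theta]=0$ (algebraic case), resp. $\mathrm{Ker}(f^{C(f)})=\mathrm{Ker}(f^{C(f)+1})$ for all $f$ with $C(f)<\infty$ (transcendental case). $\theta$ is $C$-image-complete if $\mathrm{Im}(f^{C(f)})=\mathrm{Im}(f^{C(f)+1})$ for all $f\in K[X]_{\mathrm{irr}}$ with $C(f)<\infty$. Notation: $K[X]_{\mathrm{irr}}^{0<C<\infty}=\{f:0<C(f)<\infty\}$, $K[X]_{\mathrm{irr}}^{C=0}=\{f:C(f)=0\}$, and for finite $F\subseteq K[X]_{\mathrm{irr}}^{0<C<\infty}$, $F^C:=\prod_{f\in F}f^{C(f)}$. *)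

theory Defs
  imports Main "HOL-Computational_Algebra.Polynomial" "HOL-Library.Extended_Nat"
begin

definition irr_monic :: "'k::field poly set" where
  "irr_monic = {f. irreducible f \<and> lead_coeff f = 1}"

definition poly_endo :: "('k::field \<Rightarrow> 'v::ab_group_add \<Rightarrow> 'v) \<Rightarrow> 'k poly \<Rightarrow> ('v \<Rightarrow> 'v) \<Rightarrow> 'v \<Rightarrow> 'v" where
  "poly_endo sc \<rho> \<theta> v = (\<Sum>i\<le>degree \<rho>. sc (coeff \<rho> i) ((\<theta> ^^ i) v))"

definition Ker_p :: "('k::field \<Rightarrow> 'v::ab_group_add \<Rightarrow> 'v) \<Rightarrow> ('v \<Rightarrow> 'v) \<Rightarrow> 'k poly \<Rightarrow> 'v set" where
  "Ker_p sc \<theta> \<rho> = {v. poly_endo sc \<rho> \<theta> v = 0}"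

definition Im_p :: "('k::field \<Rightarrow> 'v::ab_group_add \<Rightarrow> 'v) \<Rightarrow> ('v \<Rightarrow> 'v) \<Rightarrow> 'k poly \<Rightarrow> 'v set" where
  "Im_p sc \<theta> \<rho> = range (poly_endo sc \<rho> \<theta>)"

text \<open>Kernel configuration C = (c, d). The sum over all f is an enat-valued sum,
  which is infinite unless the support of c is finite; hence the formulation.\<close>
definition kernel_config :: "('k::field poly \<Rightarrow> enat) \<Rightarrow> enat \<Rightarrow> bool" where
  "kernel_config c d \<longleftrightarrow> d \<noteq> 0 \<and>
     (d = \<infinity> \<or> (finite {f \<in> irr_monic. c f \<noteq> 0} \<and>
                d = (\<Sum>f\<in>{f \<in> irr_monic. c f \<noteq> 0}. of_nat (degree f) * c f)))"

definition MiPo :: "('k::field poly \<Rightarrow> enat) \<Rightarrow> 'k poly" where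
  "MiPo c = (\<Prod>f\<in>{f \<in> irr_monic. c f \<noteq> 0}. f ^ the_enat (c f))"

definition C_endomorphism ::
  "('k::field \<Rightarrow> 'v::ab_group_add \<Rightarrow> 'v) \<Rightarrow> ('k poly \<Rightarrow> enat) \<Rightarrow> enat \<Rightarrow> ('v \<Rightarrow> 'v) \<Rightarrow> bool" where
  "C_endomorphism sc c d \<theta> \<longleftrightarrow>
     (if d < \<infinity> then (\<forall>v. poly_endo sc (MiPo c) \<theta> v = 0)
      else (\<forall>f \<in> irr_monic. c f < \<infinity> \<longrightarrow>
              Ker_p sc \<theta> (f ^ the_enat (c f)) = Ker_p sc \<theta> (f ^ (the_enat (c f) + 1))))"

definition C_image_complete ::
  "('k::field \<Rightarrow> 'v::ab_group_add \<Rightarrow> 'v) \<Rightarrow> ('k poly \<Rightarrow> enat) \<Rightarrow> ('v \<Rightarrow> 'v) \<Rightarrow> bool" where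
  "C_image_complete sc c \<theta> \<longleftrightarrow>
     (\<forall>f \<in> irr_monic. c f < \<infinity> \<longrightarrow>
        Im_p sc \<theta> (f ^ the_enat (c f)) = Im_p sc \<theta> (f ^ (the_enat (c f) + 1)))"

definition powC :: "('k::field poly \<Rightarrow> enat) \<Rightarrow> 'k poly set \<Rightarrow> 'k poly" where
  "powC c F = (\<Prod>f\<in>F. f ^ the_enat (c f))"

definition internal_direct_sum :: "'i set \<Rightarrow> ('i \<Rightarrow> 'v::ab_group_add set) \<Rightarrow> 'v set \<Rightarrow> bool" where
  "internal_direct_sum I U W \<longleftrightarrow> finite I \<and>
     W = {\<Sum>i\<in>I. u i | u. \<forall>i\<in>I. u i \<in> U i} \<and>
     (\<forall>u. (\<forall>i\<in>I. u i \<in> U i) \<and> (\<Sum>i\<in>I. u i) = 0 \<longrightarrow> (\<forall>i\<in>I. u i = 0))"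

definition direct_sum2 :: "'v::ab_group_add set \<Rightarrow> 'v set \<Rightarrow> 'v set \<Rightarrow> bool" where
  "direct_sum2 A B W \<longleftrightarrow> internal_direct_sum (UNIV :: bool set) (\<lambda>b. if b then A else B) W"

definition direct_sum_with :: "'v::ab_group_add set \<Rightarrow> 'i set \<Rightarrow> ('i \<Rightarrow> 'v set) \<Rightarrow> 'v set \<Rightarrow> bool" where
  "direct_sum_with A I U W \<longleftrightarrow>
     internal_direct_sum (insert None (Some ` I)) (\<lambda>j. case j of None \<Rightarrow> A | Some i \<Rightarrow> U i) W"

end

theory Submission
  imports Defs
begin

lemma poly_bezout:
  fixes p q :: "'k::field poly"
  assumes cop: "coprime p q"
  shows "\<exists>s t. s*p + t*q = 1"
proof -
  define I where "I = {s*p + t*q | s t. True}"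
  have "p \<noteq> 0 \<or> q \<noteq> 0" using cop by auto
  moreover have "p \<in> I" unfolding I_def by (rule CollectI, rule exI[of _ 1], rule exI[of _ 0]) simp
  moreover have "q \<in> I" unfolding I_def by (rule CollectI, rule exI[of _ 0], rule exI[of _ 1]) simp
  ultimately have pqI: "p \<in> I" "q \<in> I" and "\<exists>m\<in>I. m \<noteq> 0" by blast+
  then have "\<exists>n. \<exists>m\<in>I. m \<noteq> 0 \<and> degree m = n" by blast
  then obtain m where mI: "m \<in> I" and m0: "m \<noteq> 0"
    and mmin: "\<And>m'. m' \<in> I \<Longrightarrow> m' \<noteq> 0 \<Longrightarrow> degree m \<le> degree m'"
  proof -
    let ?n = "LEAST n. \<exists>m\<in>I. m \<noteq> 0 \<and> degree m = n"
    assume H: "\<And>m. m \<in> I \<Longrightarrow> m \<noteq> 0 \<Longrightarrow> (\<And>m'. m' \<in> I \<Longrightarrow> m' \<noteq> 0 \<Longrightarrow> degree m \<le> degree m') \<Longrightarrow> thesis"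
    assume ex: "\<exists>n. \<exists>m\<in>I. m \<noteq> 0 \<and> degree m = n"
    from LeastI_ex[OF ex] obtain m where "m \<in> I" "m \<noteq> 0" "degree m = ?n" by blast
    moreover have "\<And>m'. m' \<in> I \<Longrightarrow> m' \<noteq> 0 \<Longrightarrow> ?n \<le> degree m'"
      by (rule Least_le) blast
    ultimately show thesis using H by metis
  qed
  from mI obtain s0 t0 where m: "m = s0*p + t0*q" unfolding I_def by blast
  have dv: "m dvd x" if "x \<in> I" for x
  proof -
    from that obtain s t where x: "x = s*p + t*q" unfolding I_def by blast
    have "x mod m = x - (x div m) * m" by (simp add: minus_div_mult_eq_mod)
    also have "\<dots> = (s - (x div m)*s0)*p + (t - (x div m)*t0)*q" using x m by (simp add: algebra_simps)
    finally have "x mod m \<in> I" unfolding I_def by blast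
    moreover have "x mod m \<noteq> 0 \<Longrightarrow> degree (x mod m) < degree m" using degree_mod_less m0 by blast
    ultimately have "x mod m = 0" using mmin by (meson leD)
    then show ?thesis by (simp add: mod_eq_0_iff_dvd)
  qed
  have "is_unit m" using dv[OF pqI(1)] dv[OF pqI(2)] cop by (meson coprime_common_divisor)
  then obtain k where "1 = m * k" by (elim dvdE) auto
  then have "(k*s0)*p + (k*t0)*q = 1" using m by (simp add: algebra_simps)
  then show ?thesis by blast
qed

lemma irr_monic_coprime:
  fixes f h :: "'k::field poly"
  assumes f: "f \<in> irr_monic" and h: "h \<in> irr_monic" and ne: "f \<noteq> h"
  shows "coprime f h"
proof (rule coprimeI)
  fix x assume xf: "x dvd f" and xh: "x dvd h"
  from f h have fi: "irreducible f" "lead_coeff f = 1" and hi: "irreducible h" "lead_coeff h = 1"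
    by (auto simp: irr_monic_def)
  show "is_unit x"
  proof (rule ccontr)
    assume nu: "\<not> is_unit x"
    from xf obtain k where fk: "f = x * k" by (elim dvdE) auto
    with fi nu have ku: "is_unit k" using irreducibleD by blast
    from xh obtain j where hj: "h = x * j" by (elim dvdE) auto
    with hi nu have ju: "is_unit j" using irreducibleD by blast
    from ku obtain a where ka: "k = [:a:]" "a \<noteq> 0" by (auto simp: is_unit_poly_iff dvd_field_iff)
    from ju obtain b where jb: "j = [:b:]" "b \<noteq> 0" by (auto simp: is_unit_poly_iff dvd_field_iff)
    have "lead_coeff x * a = 1" using fk ka fi by (simp add: lead_coeff_mult mult.commute)
    moreover have "lead_coeff x * b = 1" using hj jb hi by (simp add: lead_coeff_mult mult.commute)
    ultimately have "a = b" by (metis mult.left_commute mult.right_neutral mult_1)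
    then show False using fk hj ka jb ne by simp
  qed
qed

lemma monic_irr_factor:
  fixes r :: "'k::field poly"
  shows "degree r > 0 \<Longrightarrow> \<exists>g\<in>irr_monic. g dvd r"
proof (induction "degree r" arbitrary: r rule: less_induct)
  case less
  then have r0: "r \<noteq> 0" by auto
  have nu: "\<not> is_unit r" using less.prems by (auto simp: is_unit_poly_iff dvd_field_iff)
  show ?case
  proof (cases "irreducible r")
    case True
    define g where "g = smult (inverse (lead_coeff r)) r"
    have "lead_coeff g = 1" using r0 by (simp add: g_def)
    moreover have "irreducible g"
    proof -
      have "g = [:inverse (lead_coeff r):] * r" by (simp add: g_def)
      moreover have "is_unit [:inverse (lead_coeff r):]" using r0 by (simp add: is_unit_poly_iff dvd_field_iff)
      ultimately show ?thesis using True irreducible_mult_unit_left by metis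
    qed
    moreover have "g dvd r"
    proof -
      have "r = [:lead_coeff r:] * g" using r0 by (simp add: g_def)
      then show ?thesis by (metis dvd_triv_right)
    qed
    ultimately show ?thesis by (auto simp: irr_monic_def)
  next
    case False
    then obtain a b where rab: "r = a * b" and au: "\<not> is_unit a" and bu: "\<not> is_unit b"
      using r0 nu by (auto simp: irreducible_def)
    have a0: "a \<noteq> 0" "b \<noteq> 0" using rab r0 by auto
    have "degree a > 0" using au a0 by (metis gr0I is_unit_iff_degree)
    moreover have "degree b > 0" using bu a0 by (metis gr0I is_unit_iff_degree)
    ultimately have "degree a < degree r" using rab a0 by (simp add: degree_mult_eq)
    then obtain g where "g \<in> irr_monic" "g dvd a" using less \<open>degree a > 0\<close> by blast
    then show ?thesis using rab by (meson dvd_mult2)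
  qed
qed


lemma bez_coprime:
  fixes p q :: "'k::field poly"
  assumes "s*p + t*q = 1" shows "coprime p q"
proof (rule coprimeI)
  fix d assume "d dvd p" "d dvd q"
  then have "d dvd s*p + t*q" by simp
  then show "is_unit d" using assms by simp
qed

lemma coprime_mult_left_poly:
  fixes a b c :: "'k::field poly"
  assumes "coprime a c" "coprime b c" shows "coprime (a*b) c"
proof -
  obtain s t where 1: "s*a + t*c = 1" using poly_bezout[OF assms(1)] by blast
  obtain s' t' where 2: "s'*b + t'*c = 1" using poly_bezout[OF assms(2)] by blast
  have "(s*a + t*c) * (s'*b + t'*c) = 1" using 1 2 by simp
  then have "(s*s')*(a*b) + (s*a*t' + t*s'*b + t*t'*c)*c = 1" by (simp add: algebra_simps)
  then show ?thesis by (rule bez_coprime)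
qed

lemma coprime_power_left_poly:
  fixes a c :: "'k::field poly"
  assumes "coprime a c" shows "coprime (a^n) c"
  by (induction n) (simp_all add: coprime_mult_left_poly assms)

lemma coprime_prod_left_poly:
  fixes c :: "'k::field poly"
  assumes "\<And>i. i \<in> A \<Longrightarrow> coprime (g i) c" shows "coprime (\<Prod>i\<in>A. g i) c"
  using assms by (induction A rule: infinite_finite_induct) (simp_all add: coprime_mult_left_poly)

lemma powC_empty [simp]: "powC c {} = 1" by (simp add: powC_def)
lemma powC_insert: "finite H \<Longrightarrow> h \<notin> H \<Longrightarrow> powC c (insert h H) = h ^ the_enat (c h) * powC c H"
  by (simp add: powC_def)
lemma powC_single: "powC c {g} = g ^ the_enat (c g)" by (simp add: powC_def)
lemma powC_dvd: "finite F \<Longrightarrow> f \<in> F \<Longrightarrow> f ^ the_enat (c f) dvd powC c F"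
  unfolding powC_def by (rule dvd_prodI)
lemma powC_union: "finite A \<Longrightarrow> finite B \<Longrightarrow> A \<inter> B = {} \<Longrightarrow> powC c (A \<union> B) = powC c A * powC c B"
  unfolding powC_def by (rule prod.union_disjoint)
lemma powC_subset_dvd: "finite B \<Longrightarrow> A \<subseteq> B \<Longrightarrow> powC c A dvd powC c B"
  unfolding powC_def by (rule prod_dvd_prod_subset)

lemma coprime_pw_powC:
  fixes f :: "'k::field poly"
  assumes "f \<in> irr_monic" "H \<subseteq> irr_monic" "f \<notin> H"
  shows "coprime (f ^ a) (powC c H)"
  unfolding powC_def
proof (subst coprime_commute, rule coprime_prod_left_poly)
  fix h assume "h \<in> H"
  then have "coprime h f" using assms irr_monic_coprime by (metis subsetD)
  then have "coprime (h ^ the_enat (c h)) f" by (rule coprime_power_left_poly)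
  then show "coprime (h ^ the_enat (c h)) (f ^ a)"
    using coprime_power_left_poly coprime_commute by metis
qed

lemma coprime_powC:
  fixes A B :: "'k::field poly set"
  assumes "A \<subseteq> irr_monic" "B \<subseteq> irr_monic" "A \<inter> B = {}"
  shows "coprime (powC c A) (powC c B)"
  unfolding powC_def[of c A]
proof (rule coprime_prod_left_poly)
  fix h assume "h \<in> A"
  then show "coprime (h ^ the_enat (c h)) (powC c B)"
    using assms by (intro coprime_pw_powC) auto
qed

context
  fixes sc :: "'k::field \<Rightarrow> 'v::ab_group_add \<Rightarrow> 'v" and \<theta> :: "'v \<Rightarrow> 'v"
  assumes VS: "vector_space sc" and lin: "Vector_Spaces.linear sc sc \<theta>"
begin

interpretation V: vector_space sc by (rule VS)

abbreviation T where "T p \<equiv> poly_endo sc p \<theta>"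

lemma th_add: "\<theta> (x + y) = \<theta> x + \<theta> y"
  using lin unfolding Vector_Spaces.linear_iff by blast
lemma th_sc: "\<theta> (sc a x) = sc a (\<theta> x)"
  using lin unfolding Vector_Spaces.linear_iff by blast
lemma th_zero [simp]: "\<theta> 0 = 0"
  using module_hom.zero[OF lin[unfolded linear_iff_module_hom]] .

lemma T_ext: "degree p \<le> n \<Longrightarrow> T p v = (\<Sum>i\<le>n. sc (coeff p i) ((\<theta> ^^ i) v))"
  unfolding poly_endo_def
  by (rule sum.mono_neutral_left) (auto simp: coeff_eq_0)

lemma T_0 [simp]: "T 0 v = 0"
  by (simp add: poly_endo_def)

lemma T_pCons: "T (pCons a p) v = sc a v + T p (\<theta> v)"
proof -
  have "T (pCons a p) v = (\<Sum>i\<le>Suc (degree p). sc (coeff (pCons a p) i) ((\<theta> ^^ i) v))"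
    by (rule T_ext) (simp add: degree_pCons_le)
  also have "\<dots> = sc a v + (\<Sum>i\<le>degree p. sc (coeff p i) ((\<theta> ^^ Suc i) v))"
    by (subst sum.atMost_Suc_shift) (simp del: sum.atMost_Suc)
  also have "(\<Sum>i\<le>degree p. sc (coeff p i) ((\<theta> ^^ Suc i) v)) = T p (\<theta> v)"
    unfolding poly_endo_def by (simp add: funpow_Suc_right del: funpow.simps)
  finally show ?thesis .
qed

lemma T_const [simp]: "T [:a:] v = sc a v"
  by (simp add: T_pCons)

lemma T_one [simp]: "T 1 v = v"
  by (simp add: one_pCons T_pCons)

lemma T_add_v: "T p (u + v) = T p u + T p v"
  by (induction p arbitrary: u v) (simp_all add: T_pCons th_add V.scale_right_distrib algebra_simps)

lemma T_sc_v: "T p (sc a v) = sc a (T p v)"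
  by (induction p arbitrary: v) (simp_all add: T_pCons th_sc V.scale_right_distrib V.scale_left_commute)

lemma T_lin: "Vector_Spaces.linear sc sc (T p)"
  unfolding Vector_Spaces.linear_iff using VS T_add_v T_sc_v by blast

lemma T_zero_v [simp]: "T p 0 = 0"
  using module_hom.zero[OF T_lin[unfolded linear_iff_module_hom]] .

lemma T_diff_v: "T p (u - v) = T p u - T p v"
  using module_hom.diff[OF T_lin[unfolded linear_iff_module_hom]] .

lemma T_sum_v: "T p (sum g S) = (\<Sum>a\<in>S. T p (g a))"
  using module_hom.sum[OF T_lin[unfolded linear_iff_module_hom]] .

lemma T_theta: "T p (\<theta> v) = \<theta> (T p v)"
  by (induction p arbitrary: v) (simp_all add: T_pCons th_add th_sc)

lemma T_add: "T (p + q) v = T p v + T q v"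
proof (induction p arbitrary: q v)
  case 0 then show ?case by simp
next
  case (pCons a p)
  obtain b q' where q: "q = pCons b q'" by (cases q)
  show ?case using pCons.IH[of q' "\<theta> v"] by (simp add: q T_pCons V.scale_left_distrib algebra_simps)
qed

lemma T_smult: "T (smult a p) v = sc a (T p v)"
  by (induction p arbitrary: v) (simp_all add: T_pCons V.scale_right_distrib T_sc_v)

lemma T_mult: "T (p * q) v = T p (T q v)"
proof (induction p arbitrary: v)
  case 0 then show ?case by simp
next
  case (pCons a p)
  have "pCons a p * q = smult a q + pCons 0 (p * q)" by simp
  then have "T (pCons a p * q) v = sc a (T q v) + T (p * q) (\<theta> v)"
    by (simp add: T_add T_smult T_pCons)
  also have "\<dots> = T (pCons a p) (T q v)"
    using pCons(2) by (simp add: T_pCons T_theta)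
  finally show ?case .
qed

lemma T_comm: "T p (T q v) = T q (T p v)"
  by (metis T_mult mult.commute)

abbreviation K where "K p \<equiv> Ker_p sc \<theta> p"
abbreviation Im where "Im p \<equiv> Im_p sc \<theta> p"

lemma Ker_iff: "v \<in> K p \<longleftrightarrow> T p v = 0" by (simp add: Ker_p_def)
lemma Im_iff: "v \<in> Im p \<longleftrightarrow> (\<exists>w. v = T p w)" by (auto simp: Im_p_def)

lemma Im_mult_image: "Im (p * q) = T p ` Im q"
  by (auto simp: Im_p_def T_mult image_iff)

lemma Im_dvd: "p dvd q \<Longrightarrow> Im q \<subseteq> Im p"
  by (auto simp: Im_iff T_mult elim!: dvdE)

lemma Ker_dvd: "p dvd q \<Longrightarrow> K p \<subseteq> K q"
  by (auto simp: Ker_iff T_mult elim!: dvdE) (metis T_comm T_zero_v)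

lemma Im_inv: "v \<in> Im p \<Longrightarrow> T q v \<in> Im p"
  by (auto simp: Im_iff T_comm[of q p])

lemma Im_add: "u \<in> Im p \<Longrightarrow> v \<in> Im p \<Longrightarrow> u + v \<in> Im p"
  by (auto simp: Im_iff T_add_v[symmetric])

lemma Im_diff: "u \<in> Im p \<Longrightarrow> v \<in> Im p \<Longrightarrow> u - v \<in> Im p"
  by (auto simp: Im_iff T_diff_v[symmetric])

lemma Im_zero: "0 \<in> Im p"
  by (auto simp: Im_iff intro: exI[of _ 0])

lemma Im_sum: "finite S \<Longrightarrow> (\<And>i. i \<in> S \<Longrightarrow> g i \<in> Im p) \<Longrightarrow> sum g S \<in> Im p"
  by (induction S rule: finite_induct) (auto intro: Im_add Im_zero)

lemma Im_one: "Im 1 = UNIV"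
  by (auto simp: Im_iff)

lemma coprime_Ker_Im:
  assumes "coprime p q" "v \<in> K p" shows "v \<in> Im q"
proof -
  obtain s t where st: "s*p + t*q = 1" using poly_bezout[OF assms(1)] by blast
  have "v = T (s*p + t*q) v" using st by simp
  also have "\<dots> = T s (T p v) + T q (T t v)" by (simp add: T_add T_mult T_comm[of q t])
  also have "\<dots> = T q (T t v)" using assms(2) by (simp add: Ker_iff)
  finally show ?thesis by (auto simp: Im_iff)
qed

lemma coprime_Ker_Ker:
  assumes "coprime p q" "v \<in> K p" "v \<in> K q" shows "v = 0"
proof -
  obtain s t where st: "s*p + t*q = 1" using poly_bezout[OF assms(1)] by blast
  have "v = T (s*p + t*q) v" using st by simp
  also have "\<dots> = T s (T p v) + T t (T q v)" by (simp add: T_add T_mult)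
  also have "\<dots> = 0" using assms(2,3) by (simp add: Ker_iff)
  finally show ?thesis .
qed

lemma Ker_stab1:
  assumes st: "K (f^n) = K (f^(n+1))" and dv: "f^n dvd X"
  shows "K (X * f) = K X"
proof
  show "K X \<subseteq> K (X * f)" by (rule Ker_dvd) simp
next
  obtain Q where X: "X = f^n * Q" using dv by (elim dvdE)
  show "K (X * f) \<subseteq> K X"
  proof
    fix v assume "v \<in> K (X * f)"
    then have "T (f^(n+1)) (T Q v) = 0" by (simp add: Ker_iff X T_mult[symmetric] algebra_simps)
    then have "T Q v \<in> K (f^n)" using st by (simp add: Ker_iff)
    then show "v \<in> K X" by (simp add: Ker_iff X T_mult)
  qed
qed

lemma Ker_stab:
  assumes st: "K (f^n) = K (f^(n+1))" and dv: "f^n dvd X"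
  shows "K (X * f^k) = K X"
  using dv
proof (induction k arbitrary: X)
  case 0 then show ?case by simp
next
  case (Suc k)
  have "K (X * f ^ Suc k) = K ((X * f) * f^k)" by (simp add: algebra_simps)
  also have "\<dots> = K (X * f)" using Suc by (meson dvd_mult2)
  also have "\<dots> = K X" using Ker_stab1[OF st Suc.prems] .
  finally show ?case .
qed

lemma Im_stab1:
  assumes st: "Im (f^n) = Im (f^(n+1))" and dv: "f^n dvd X"
  shows "Im (X * f) = Im X"
proof -
  obtain Q where X: "X = f^n * Q" using dv by (elim dvdE)
  have "Im (X * f) = Im (Q * f^(n+1))" by (simp add: X algebra_simps)
  also have "\<dots> = T Q ` Im (f^(n+1))" by (rule Im_mult_image)
  also have "\<dots> = T Q ` Im (f^n)" using st by simp
  also have "\<dots> = Im (Q * f^n)" by (rule Im_mult_image[symmetric])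
  finally show ?thesis by (simp add: X algebra_simps)
qed

lemma Im_stab:
  assumes st: "Im (f^n) = Im (f^(n+1))" and dv: "f^n dvd X"
  shows "Im (X * f^k) = Im X"
  using dv
proof (induction k arbitrary: X)
  case 0 then show ?case by simp
next
  case (Suc k)
  have "Im (X * f ^ Suc k) = Im ((X * f) * f^k)" by (simp add: algebra_simps)
  also have "\<dots> = Im (X * f)" using Suc by (meson dvd_mult2)
  also have "\<dots> = Im X" using Im_stab1[OF st Suc.prems] .
  finally show ?case .
qed

lemma fitting_ex:
  assumes "Im (P * P) = Im P" shows "\<exists>a b. a \<in> Im P \<and> b \<in> K P \<and> v = a + b"
proof -
  have "T P v \<in> Im (P * P)" using assms by (auto simp: Im_iff)
  then obtain w where w: "T P v = T P (T P w)" by (auto simp: Im_iff T_mult)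
  have "T P w \<in> Im P" by (auto simp: Im_iff)
  moreover have "v - T P w \<in> K P" using w by (simp add: Ker_iff T_diff_v)
  ultimately show ?thesis by (intro exI[of _ "T P w"] exI[of _ "v - T P w"]) simp
qed

lemma fitting_un:
  assumes "K (P * P) = K P" "a \<in> Im P" "a \<in> K P" shows "a = 0"
proof -
  obtain w where a: "a = T P w" using assms(2) by (auto simp: Im_iff)
  then have "w \<in> K (P * P)" using assms(3) by (simp add: Ker_iff T_mult)
  then have "w \<in> K P" using assms(1) by simp
  then show ?thesis by (simp add: a Ker_iff)
qed

context
  fixes c :: "'k poly \<Rightarrow> enat" and S :: "'k poly set"
  assumes S_irr: "S \<subseteq> irr_monic"
    and KS0: "\<forall>f\<in>S. K (f ^ the_enat (c f)) = K (f ^ (the_enat (c f) + 1))"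
    and IS0: "\<forall>f\<in>S. Im (f ^ the_enat (c f)) = Im (f ^ (the_enat (c f) + 1))"
begin

lemma KS: "f \<in> S \<Longrightarrow> K (f ^ the_enat (c f)) = K (f ^ (the_enat (c f) + 1))"
  using KS0 by blast
lemma IS: "f \<in> S \<Longrightarrow> Im (f ^ the_enat (c f)) = Im (f ^ (the_enat (c f) + 1))"
  using IS0 by blast

lemma PP_aux:
  assumes F: "finite F" "F \<subseteq> S" and H: "H \<subseteq> F"
  shows "Im (powC c F * powC c H) = Im (powC c F) \<and> K (powC c F * powC c H) = K (powC c F)"
proof -
  have "finite H" using F H finite_subset by blast
  then show ?thesis using H
  proof (induction H rule: finite_induct)
    case empty then show ?case by simp
  next
    case (insert h H)
    let ?X = "powC c F * powC c H"
    have hF: "h \<in> F" "h \<in> S" using insert F by auto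
    have dv: "h ^ the_enat (c h) dvd ?X" using powC_dvd[OF F(1) hF(1)] by (simp add: dvd_mult2)
    have eq: "powC c F * powC c (insert h H) = ?X * h ^ the_enat (c h)"
      using insert by (simp add: powC_insert algebra_simps)
    show ?case unfolding eq
      using Im_stab[OF IS[OF hF(2)] dv] Ker_stab[OF KS[OF hF(2)] dv] insert by simp
  qed
qed

lemma PP:
  assumes "finite F" "F \<subseteq> S"
  shows "Im (powC c F * powC c F) = Im (powC c F)" "K (powC c F * powC c F) = K (powC c F)"
  using PP_aux[OF assms order_refl] by auto

lemma KerDecomp:
  assumes "finite D" "D \<subseteq> S"
  shows "v \<in> K (powC c D) \<Longrightarrow> \<exists>u. (\<forall>f\<in>D. u f \<in> K (f ^ the_enat (c f))) \<and> v = sum u D"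
  using assms
proof (induction D arbitrary: v rule: finite_induct)
  case empty then show ?case by (simp add: Ker_iff)
next
  case (insert g D)
  let ?p = "g ^ the_enat (c g)" and ?Q = "powC c D"
  have cop: "coprime ?p ?Q" using insert S_irr by (intro coprime_pw_powC) auto
  obtain s t where st: "s * ?p + t * ?Q = 1" using poly_bezout[OF cop] by blast
  have v0: "T ?p (T ?Q v) = 0" using insert(4) insert(1,2) by (simp add: Ker_iff powC_insert T_mult)
  have "v = T (s * ?p + t * ?Q) v" using st by simp
  also have "\<dots> = T s (T ?p v) + T t (T ?Q v)" by (simp add: T_add T_mult)
  finally have v: "v = T s (T ?p v) + T t (T ?Q v)" .
  have "T s (T ?p v) \<in> K ?Q" using v0 by (simp add: Ker_iff T_comm)
  then obtain u where u: "\<forall>f\<in>D. u f \<in> K (f ^ the_enat (c f))" "T s (T ?p v) = sum u D"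
    using insert by blast
  have k2: "T t (T ?Q v) \<in> K ?p" using v0 by (simp add: Ker_iff T_comm)
  let ?u = "u(g := T t (T ?Q v))"
  have "sum ?u (insert g D) = T t (T ?Q v) + sum u D"
    using insert(1,2) by (simp add: sum.insert) (rule sum.cong, auto)
  then have "v = sum ?u (insert g D)" using v u by (simp add: add.commute)
  moreover have "\<forall>f\<in>insert g D. ?u f \<in> K (f ^ the_enat (c f))" using u k2 insert(2) by auto
  ultimately show ?case by blast
qed

lemma G_facts:
  assumes F': "finite F'" "F \<subseteq> F'" "F' \<subseteq> S"
  shows "finite F" "finite (F' - F)" "powC c F' = powC c F * powC c (F' - F)"
    "coprime (powC c F) (powC c (F' - F))"
proof -
  show fF: "finite F" "finite (F' - F)" using F' finite_subset by auto
  have "F' = F \<union> (F' - F)" using F' by auto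
  then show "powC c F' = powC c F * powC c (F' - F)"
    using powC_union[OF fF, of c] by auto
  show "coprime (powC c F) (powC c (F' - F))"
    using F' S_irr by (intro coprime_powC) auto
qed

lemma G1:
  assumes F': "finite F'" "F \<subseteq> F'" "F' \<subseteq> S"
    and w: "w \<in> Im (powC c F')" and u: "\<forall>f\<in>F' - F. u f \<in> K (f ^ the_enat (c f))"
  shows "w + sum u (F' - F) \<in> Im (powC c F)"
proof (rule Im_add)
  note GF = G_facts[OF F']
  show "w \<in> Im (powC c F)" using w Im_dvd[of "powC c F" "powC c F'"] GF(3) by auto
  show "sum u (F' - F) \<in> Im (powC c F)"
  proof (rule Im_sum[OF GF(2)])
    fix f assume f: "f \<in> F' - F"
    have "coprime (f ^ the_enat (c f)) (powC c F)"
      using f F' S_irr by (intro coprime_pw_powC) auto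
    then show "u f \<in> Im (powC c F)" using coprime_Ker_Im u f by blast
  qed
qed

lemma G3:
  assumes F': "finite F'" "F \<subseteq> F'" "F' \<subseteq> S"
    and w: "w \<in> Im (powC c F')" and u: "\<forall>f\<in>F' - F. u f \<in> K (f ^ the_enat (c f))"
    and z: "w + sum u (F' - F) = 0"
  shows "w = 0 \<and> (\<forall>f\<in>F' - F. u f = 0)"
proof -
  note GF = G_facts[OF F']
  define D where "D = F' - F"
  have fD: "finite D" using GF D_def by simp
  have uD: "\<forall>f\<in>D. u f \<in> K (f ^ the_enat (c f))" using u D_def by simp
  have "T (powC c D) (sum u D) = (\<Sum>f\<in>D. T (powC c D) (u f))" by (rule T_sum_v)
  also have "\<dots> = 0"
  proof (rule sum.neutral, rule ballI)
    fix f assume "f \<in> D"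
    then have "u f \<in> K (powC c D)" using uD Ker_dvd[OF powC_dvd[OF fD]] by blast
    then show "T (powC c D) (u f) = 0" by (simp add: Ker_iff)
  qed
  finally have s0: "T (powC c D) (sum u D) = 0" .
  have "T (powC c D) w = 0"
    using arg_cong[OF z, of "T (powC c D)"] s0 by (simp add: T_add_v D_def)
  then have "w \<in> K (powC c F')" using Ker_dvd[of "powC c D" "powC c F'"] GF(3)
    by (auto simp: Ker_iff D_def)
  then have w0: "w = 0" using fitting_un[OF PP(2)[OF F'(1,3)] w] by simp
  then have sz: "sum u D = 0" using z D_def by simp
  have "u g = 0" if g: "g \<in> D" for g
  proof -
    let ?M = "powC c (D - {g})"
    have fD': "finite (D - {g})" using fD by simp
    have "T ?M (sum u D) = (\<Sum>f\<in>D. T ?M (u f))" by (rule T_sum_v)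
    also have "\<dots> = T ?M (u g) + (\<Sum>f\<in>D - {g}. T ?M (u f))"
      using g fD by (simp add: sum.remove)
    also have "(\<Sum>f\<in>D - {g}. T ?M (u f)) = 0"
    proof (rule sum.neutral, rule ballI)
      fix f assume f: "f \<in> D - {g}"
      then have "u f \<in> K ?M" using uD Ker_dvd[OF powC_dvd[OF fD']] by blast
      then show "T ?M (u f) = 0" by (simp add: Ker_iff)
    qed
    finally have "u g \<in> K ?M" using sz by (simp add: Ker_iff)
    moreover have "coprime (g ^ the_enat (c g)) ?M"
      using g F' S_irr D_def by (intro coprime_pw_powC) auto
    ultimately show ?thesis using coprime_Ker_Ker uD g by blast
  qed
  then show ?thesis using w0 D_def by simp
qed

lemma G2:
  assumes F': "finite F'" "F \<subseteq> F'" "F' \<subseteq> S"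
    and v: "v \<in> Im (powC c F)"
  shows "\<exists>w u. w \<in> Im (powC c F') \<and> (\<forall>f\<in>F' - F. u f \<in> K (f ^ the_enat (c f)))
           \<and> v = w + sum u (F' - F)"
proof -
  note GF = G_facts[OF F']
  let ?P = "powC c F" and ?Q = "powC c (F' - F)"
  obtain a k where a: "a \<in> Im (powC c F')" and k: "k \<in> K (powC c F')" and v: "v = a + k"
    using fitting_ex[OF PP(1)[OF F'(1,3)]] by blast
  have aP: "a \<in> Im ?P" using a Im_dvd[of "?P" "powC c F'"] GF(3) by auto
  have kP: "k \<in> Im ?P" using Im_diff[OF assms(4) aP] v by simp
  have kPQ: "T ?P (T ?Q k) = 0" using k GF(3) by (simp add: Ker_iff T_mult)
  obtain s t where st: "s * ?P + t * ?Q = 1" using poly_bezout[OF GF(4)] by blast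
  have "k = T (s * ?P + t * ?Q) k" using st by simp
  also have "\<dots> = T s (T ?P k) + T t (T ?Q k)" by (simp add: T_add T_mult)
  finally have kk: "k = T s (T ?P k) + T t (T ?Q k)" .
  have "T t (T ?Q k) \<in> K ?P" using kPQ by (simp add: Ker_iff T_comm[of ?P])
  moreover have "T t (T ?Q k) \<in> Im ?P" using kP by (intro Im_inv)
  ultimately have "T t (T ?Q k) = 0" using fitting_un[OF PP(2)[OF GF(1)]] F' by blast
  with kk have "k = T s (T ?P k)" by simp
  then have "k \<in> K ?Q" using kPQ by (simp add: Ker_iff) (metis T_comm T_zero_v)
  then obtain u where u: "\<forall>f\<in>F' - F. u f \<in> K (f ^ the_enat (c f))" "k = sum u (F' - F)"
    using KerDecomp[OF GF(2)] F' by blast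
  show ?thesis using a u v by blast
qed

lemma Im_smult: "a \<noteq> 0 \<Longrightarrow> Im (smult a X) = Im X"
proof -
  assume a: "a \<noteq> 0"
  have "Im (smult a X) \<subseteq> Im X" by (auto simp: Im_iff T_smult T_sc_v[symmetric])
  moreover have "Im X \<subseteq> Im (smult a X)"
  proof
    fix v assume "v \<in> Im X"
    then obtain w where "v = T X w" by (auto simp: Im_iff)
    then have "v = T (smult a X) (sc (inverse a) w)" using a by (simp add: T_smult T_sc_v)
    then show "v \<in> Im (smult a X)" by (auto simp: Im_iff)
  qed
  ultimately show ?thesis by blast
qed

lemma claim1_aux:
  assumes F: "finite F" "F \<subseteq> S"
    and Z: "\<forall>g\<in>irr_monic. c g = 0 \<longrightarrow> Im g = UNIV"
  shows "powC c F dvd X \<Longrightarrow> r \<noteq> 0 \<Longrightarrow> (\<forall>g \<in> irr_monic. g dvd r \<longrightarrow> c g = 0 \<or> g \<in> F)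
     \<Longrightarrow> Im (X * r) = Im X"
proof (induction "degree r" arbitrary: X r rule: less_induct)
  case less
  show ?case
  proof (cases "degree r = 0")
    case True
    then obtain a where r: "r = [:a:]" by (metis degree_eq_zeroE)
    then have "a \<noteq> 0" using less by simp
    moreover have "X * r = smult a X" using r by simp
    ultimately show ?thesis using Im_smult by simp
  next
    case False
    then obtain g where g: "g \<in> irr_monic" "g dvd r" using monic_irr_factor by blast
    then obtain r' where r': "r = g * r'" by (elim dvdE)
    have r0: "r' \<noteq> 0" "g \<noteq> 0" using less r' by auto
    have dg: "degree g > 0" using g by (auto simp: irr_monic_def irreducible_def is_unit_iff_degree)
    have dl: "degree r' < degree r" using r' r0 dg by (simp add: degree_mult_eq)
    have Xg: "Im (X * g) = Im X"
    proof (cases "g \<in> F")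
      case True
      then have "g ^ the_enat (c g) dvd X" using powC_dvd[OF F(1) True] less(2) dvd_trans by blast
      then show ?thesis using Im_stab1[OF IS] True F by auto
    next
      case False
      then have "c g = 0" using less(4) g by blast
      then have gU: "Im g = UNIV" using Z g by blast
      have e: "Im (X * g) = T X ` Im g" by (rule Im_mult_image)
      show ?thesis unfolding e gU by (simp add: Im_p_def)
    qed
    have "Im (X * r) = Im ((X * g) * r')" by (simp add: r' algebra_simps)
    also have "\<dots> = Im (X * g)"
    proof (rule less(1)[OF dl])
      show "powC c F dvd X * g" using less(2) by simp
      show "r' \<noteq> 0" by fact
      show "\<forall>g\<in>irr_monic. g dvd r' \<longrightarrow> c g = 0 \<or> g \<in> F" using less(4) r' by auto
    qed
    finally show ?thesis using Xg by simp
  qed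
qed

end

end

lemma DSW_intro:
  fixes A W :: "'v::ab_group_add set" and U :: "'i \<Rightarrow> 'v set"
  assumes fD: "finite D"
    and s1: "\<And>w u. w \<in> A \<Longrightarrow> \<forall>f\<in>D. u f \<in> U f \<Longrightarrow> w + sum u D \<in> W"
    and s2: "\<And>v. v \<in> W \<Longrightarrow> \<exists>w u. w \<in> A \<and> (\<forall>f\<in>D. u f \<in> U f) \<and> v = w + sum u D"
    and s3: "\<And>w u. w \<in> A \<Longrightarrow> \<forall>f\<in>D. u f \<in> U f \<Longrightarrow> w + sum u D = 0 \<Longrightarrow> w = 0 \<and> (\<forall>f\<in>D. u f = 0)"
  shows "direct_sum_with A D U W"
proof -
  let ?I = "insert None (Some ` D)" and ?V = "\<lambda>j. case j of None \<Rightarrow> A | Some i \<Rightarrow> U i"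
  have sumI: "sum x ?I = x None + sum (\<lambda>f. x (Some f)) D" for x :: "'i option \<Rightarrow> 'v"
    using fD by (simp add: sum.insert sum.reindex)
  have fin: "finite ?I" using fD by simp
  have eq: "W = {sum x ?I | x. \<forall>j\<in>?I. x j \<in> ?V j}"
  proof
    show "W \<subseteq> {sum x ?I | x. \<forall>j\<in>?I. x j \<in> ?V j}"
    proof
      fix v assume "v \<in> W"
      then obtain w u where wu: "w \<in> A" "\<forall>f\<in>D. u f \<in> U f" "v = w + sum u D" using s2 by blast
      define x where "x = (\<lambda>j. case j of None \<Rightarrow> w | Some f \<Rightarrow> u f)"
      have "v = sum x ?I" using wu by (simp add: sumI x_def)
      moreover have "\<forall>j\<in>?I. x j \<in> ?V j" using wu by (auto simp: x_def)
      ultimately show "v \<in> {sum x ?I | x. \<forall>j\<in>?I. x j \<in> ?V j}" by blast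
    qed
    show "{sum x ?I | x. \<forall>j\<in>?I. x j \<in> ?V j} \<subseteq> W"
    proof
      fix v assume "v \<in> {sum x ?I | x. \<forall>j\<in>?I. x j \<in> ?V j}"
      then obtain x where x: "\<forall>j\<in>?I. x j \<in> ?V j" "v = sum x ?I" by blast
      have "x None \<in> A" using x by force
      moreover have "\<forall>f\<in>D. x (Some f) \<in> U f" using x by force
      ultimately show "v \<in> W" using s1 x sumI by metis
    qed
  qed
  have un: "\<forall>x. (\<forall>j\<in>?I. x j \<in> ?V j) \<and> sum x ?I = 0 \<longrightarrow> (\<forall>j\<in>?I. x j = 0)"
  proof (intro allI impI)
    fix x :: "'i option \<Rightarrow> 'v" assume x: "(\<forall>j\<in>?I. x j \<in> ?V j) \<and> sum x ?I = 0"
    have "x None \<in> A" using x by force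
    moreover have "\<forall>f\<in>D. x (Some f) \<in> U f" using x by force
    ultimately have "x None = 0 \<and> (\<forall>f\<in>D. x (Some f) = 0)" using s3[of "x None" "\<lambda>f. x (Some f)"] x sumI by metis
    then show "\<forall>j\<in>?I. x j = 0" by auto
  qed
  show ?thesis unfolding direct_sum_with_def internal_direct_sum_def using fin eq un by blast
qed

lemma DS2_intro:
  fixes A B :: "'v::ab_group_add set"
  assumes ex: "\<And>v. \<exists>a b. a \<in> A \<and> b \<in> B \<and> v = a + b"
    and un: "\<And>a b. a \<in> A \<Longrightarrow> b \<in> B \<Longrightarrow> a + b = 0 \<Longrightarrow> a = 0 \<and> b = 0"
  shows "direct_sum2 A B UNIV"
proof -
  have sumU: "sum x (UNIV :: bool set) = x True + x False" for x :: "bool \<Rightarrow> 'v"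
    by (simp add: UNIV_bool add.commute)
  have eq: "(UNIV :: 'v set) = {sum x UNIV | x. \<forall>i\<in>UNIV. x i \<in> (if i then A else B)}"
  proof -
    have "v \<in> {sum x UNIV | x. \<forall>i\<in>UNIV. x i \<in> (if i then A else B)}" for v
    proof -
      obtain a b where ab: "a \<in> A" "b \<in> B" "v = a + b" using ex by blast
      define x where "x = (\<lambda>i::bool. if i then a else b)"
      have "v = sum x UNIV" using ab by (simp add: sumU x_def)
      moreover have "\<forall>i\<in>UNIV. x i \<in> (if i then A else B)" using ab by (simp add: x_def)
      ultimately show ?thesis by blast
    qed
    then show ?thesis by blast
  qed
  have u: "\<forall>x. (\<forall>i\<in>UNIV. x i \<in> (if i then A else B)) \<and> sum x UNIV = 0 \<longrightarrow> (\<forall>i\<in>UNIV. x i = 0)"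
  proof (intro allI impI)
    fix x :: "bool \<Rightarrow> 'v" assume x: "(\<forall>i\<in>UNIV. x i \<in> (if i then A else B)) \<and> sum x UNIV = 0"
    then have "x True \<in> A" "x False \<in> B" "x True + x False = 0"
      by (auto simp: sumU) (metis (full_types))+
    then have "x True = 0 \<and> x False = 0" using un by blast
    then show "\<forall>i\<in>UNIV. x i = 0" by (metis (full_types))
  qed
  show ?thesis unfolding direct_sum2_def internal_direct_sum_def using eq u by simp
qed

theorem lemma3p13:
  fixes sc :: "'k::field \<Rightarrow> 'v::ab_group_add \<Rightarrow> 'v"
    and \<theta> :: "'v \<Rightarrow> 'v"
    and c :: "'k poly \<Rightarrow> enat" and d :: enat
    and F :: "'k poly set"
  assumes VS: "vector_space sc"
    and lin: "Vector_Spaces.linear sc sc \<theta>"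
    and KC: "kernel_config c d"
    and endo: "C_endomorphism sc c d \<theta>"
    and imc: "C_image_complete sc c \<theta>"
    and finF: "finite F"
    and Fsub: "F \<subseteq> {f \<in> irr_monic. 0 < c f \<and> c f < \<infinity>}"
  shows "(\<forall>\<eta>. \<eta> \<noteq> 0 \<and> powC c F dvd \<eta> \<and>
              (\<forall>g \<in> irr_monic. g dvd \<eta> \<longrightarrow> c g = 0 \<or> g \<in> F)
            \<longrightarrow> Im_p sc \<theta> \<eta> = Im_p sc \<theta> (powC c F))
    \<and> direct_sum2 (Im_p sc \<theta> (powC c F)) (Ker_p sc \<theta> (powC c F)) UNIV
    \<and> direct_sum_with (Im_p sc \<theta> (powC c F)) F
          (\<lambda>f. Ker_p sc \<theta> (f ^ the_enat (c f))) UNIV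
    \<and> (\<forall>F'. finite F' \<and> F \<subseteq> F' \<and> F' \<subseteq> {f \<in> irr_monic. 0 < c f \<and> c f < \<infinity>} \<longrightarrow>
          direct_sum_with (Im_p sc \<theta> (powC c F')) (F' - F)
            (\<lambda>f. Ker_p sc \<theta> (f ^ the_enat (c f))) (Im_p sc \<theta> (powC c F)))
    \<and> (\<forall>g \<in> F. direct_sum_with (Im_p sc \<theta> (powC c F)) (F - {g})
            (\<lambda>f. Ker_p sc \<theta> (f ^ the_enat (c f))) (Im_p sc \<theta> (g ^ the_enat (c g))))"
proof -
  define S where "S = {f \<in> irr_monic. 0 < c f \<and> c f < \<infinity>}"
  have S_irr: "S \<subseteq> irr_monic" by (auto simp: S_def)
  have FS: "F \<subseteq> S" using Fsub by (simp add: S_def)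
  have IS: "\<forall>f\<in>S. Im_p sc \<theta> (f ^ the_enat (c f)) = Im_p sc \<theta> (f ^ (the_enat (c f) + 1))"
    using imc unfolding C_image_complete_def S_def by auto
  have Z: "\<forall>g\<in>irr_monic. c g = 0 \<longrightarrow> Im_p sc \<theta> g = UNIV"
  proof (intro ballI impI)
    fix g :: "'k poly" assume g: "g \<in> irr_monic" "c g = 0"
    have "c g < \<infinity>" using g(2) by simp
    then have "Im_p sc \<theta> (g ^ the_enat (c g)) = Im_p sc \<theta> (g ^ (the_enat (c g) + 1))"
      using imc g(1) unfolding C_image_complete_def by blast
    then show "Im_p sc \<theta> g = UNIV" using g(2) Im_one[OF VS lin] by (simp add: zero_enat_def)
  qed
  have KS: "\<forall>f\<in>S. Ker_p sc \<theta> (f ^ the_enat (c f)) = Ker_p sc \<theta> (f ^ (the_enat (c f) + 1))"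
  proof
    fix f assume fS: "f \<in> S"
    show "Ker_p sc \<theta> (f ^ the_enat (c f)) = Ker_p sc \<theta> (f ^ (the_enat (c f) + 1))"
    proof (cases "d < \<infinity>")
      case False
      then show ?thesis using endo fS unfolding C_endomorphism_def S_def by auto
    next
      case True
      let ?M = "{f \<in> irr_monic. c f \<noteq> 0}"
      have fM: "finite ?M" using KC True unfolding kernel_config_def by auto
      have fin: "f \<in> ?M" using fS by (auto simp: S_def)
      have MiPo: "MiPo c = f ^ the_enat (c f) * powC c (?M - {f})"
        unfolding MiPo_def powC_def using fM fin by (simp add: prod.remove)
      have zero: "\<And>v. poly_endo sc (MiPo c) \<theta> v = 0" using endo True unfolding C_endomorphism_def by auto
      have "coprime (f ^ 1) (powC c (?M - {f}))"
        using fin by (intro coprime_pw_powC) auto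
      then obtain s t where st: "s * f + t * powC c (?M - {f}) = 1" using poly_bezout by fastforce
      show ?thesis
      proof
        show "Ker_p sc \<theta> (f ^ the_enat (c f)) \<subseteq> Ker_p sc \<theta> (f ^ (the_enat (c f) + 1))"
          by (rule Ker_dvd[OF VS lin]) simp
        show "Ker_p sc \<theta> (f ^ (the_enat (c f) + 1)) \<subseteq> Ker_p sc \<theta> (f ^ the_enat (c f))"
        proof
          fix v assume v: "v \<in> Ker_p sc \<theta> (f ^ (the_enat (c f) + 1))"
          let ?R = "powC c (?M - {f})" and ?n = "the_enat (c f)"
          have "f ^ ?n = f ^ ?n * (s * f + t * ?R)" using st by simp
          also have "\<dots> = s * (f ^ ?n * f) + t * (f ^ ?n * ?R)" by (simp add: algebra_simps)
          also have "\<dots> = s * f ^ (?n + 1) + t * MiPo c" using MiPo by (simp add: power_add)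
          finally have eq: "f ^ the_enat (c f) = s * f ^ (the_enat (c f) + 1) + t * MiPo c" .
          have "poly_endo sc (f ^ the_enat (c f)) \<theta> v
              = poly_endo sc (s * f ^ (the_enat (c f) + 1) + t * MiPo c) \<theta> v"
            using arg_cong[OF eq, of "\<lambda>p. poly_endo sc p \<theta> v"] .
          also have "\<dots> = poly_endo sc s \<theta> (poly_endo sc (f ^ (the_enat (c f) + 1)) \<theta> v)
                + poly_endo sc t \<theta> (poly_endo sc (MiPo c) \<theta> v)"
            by (simp only: T_add[OF VS lin] T_mult[OF VS lin])
          also have "\<dots> = 0" using v zero by (simp add: Ker_iff[OF VS lin] T_zero_v[OF VS lin])
          finally show "v \<in> Ker_p sc \<theta> (f ^ the_enat (c f))" by (simp add: Ker_iff[OF VS lin])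
        qed
      qed
    qed
  qed
  note G1' = G1[OF VS lin S_irr KS IS] and G2' = G2[OF VS lin S_irr KS IS]
    and G3' = G3[OF VS lin S_irr KS IS]
  have DS: "\<And>F1 F2. finite F2 \<Longrightarrow> F1 \<subseteq> F2 \<Longrightarrow> F2 \<subseteq> S \<Longrightarrow>
     direct_sum_with (Im_p sc \<theta> (powC c F2)) (F2 - F1) (\<lambda>f. Ker_p sc \<theta> (f ^ the_enat (c f)))
       (Im_p sc \<theta> (powC c F1))"
  proof -
    fix F1 F2 :: "'k poly set" assume A: "finite F2" "F1 \<subseteq> F2" "F2 \<subseteq> S"
    show "direct_sum_with (Im_p sc \<theta> (powC c F2)) (F2 - F1) (\<lambda>f. Ker_p sc \<theta> (f ^ the_enat (c f)))
       (Im_p sc \<theta> (powC c F1))"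
      apply (rule DSW_intro)
      using A G1'[OF A] G2'[OF A] G3'[OF A] by auto
  qed
  have c1: "\<forall>\<eta>. \<eta> \<noteq> 0 \<and> powC c F dvd \<eta> \<and>
              (\<forall>g \<in> irr_monic. g dvd \<eta> \<longrightarrow> c g = 0 \<or> g \<in> F)
            \<longrightarrow> Im_p sc \<theta> \<eta> = Im_p sc \<theta> (powC c F)"
  proof (intro allI impI)
    fix \<eta> assume H: "\<eta> \<noteq> 0 \<and> powC c F dvd \<eta> \<and> (\<forall>g \<in> irr_monic. g dvd \<eta> \<longrightarrow> c g = 0 \<or> g \<in> F)"
    then obtain r where r: "\<eta> = powC c F * r" by (elim conjE dvdE)
    have "r \<noteq> 0" using H r by auto
    moreover have "\<forall>g \<in> irr_monic. g dvd r \<longrightarrow> c g = 0 \<or> g \<in> F" using H r by (meson dvd_mult)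
    ultimately show "Im_p sc \<theta> \<eta> = Im_p sc \<theta> (powC c F)"
      using claim1_aux[OF VS lin S_irr KS IS finF FS Z] r by simp
  qed
  have c2: "direct_sum2 (Im_p sc \<theta> (powC c F)) (Ker_p sc \<theta> (powC c F)) UNIV"
  proof (rule DS2_intro)
    show "\<exists>a b. a \<in> Im_p sc \<theta> (powC c F) \<and> b \<in> Ker_p sc \<theta> (powC c F) \<and> v = a + b" for v
      using fitting_ex[OF VS lin PP(1)[OF VS lin S_irr KS IS finF FS]] by blast
    fix a b assume ab: "a \<in> Im_p sc \<theta> (powC c F)" "b \<in> Ker_p sc \<theta> (powC c F)" "a + b = 0"
    then have "a = - b" by (simp add: eq_neg_iff_add_eq_0)
    then have "a \<in> Ker_p sc \<theta> (powC c F)" using ab(2)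
      using T_diff_v[OF VS lin, of "powC c F" 0 b] T_zero_v[OF VS lin, of "powC c F"]
      by (simp add: Ker_iff[OF VS lin])
    then have "a = 0" using fitting_un[OF VS lin PP(2)[OF VS lin S_irr KS IS finF FS] ab(1)] by simp
    then show "a = 0 \<and> b = 0" using ab(3) by simp
  qed
  have c2b: "direct_sum_with (Im_p sc \<theta> (powC c F)) F (\<lambda>f. Ker_p sc \<theta> (f ^ the_enat (c f))) UNIV"
    using DS[OF finF empty_subsetI FS] by (simp add: Im_one[OF VS lin])
  have c3: "\<forall>F'. finite F' \<and> F \<subseteq> F' \<and> F' \<subseteq> {f \<in> irr_monic. 0 < c f \<and> c f < \<infinity>} \<longrightarrow>
          direct_sum_with (Im_p sc \<theta> (powC c F')) (F' - F)
            (\<lambda>f. Ker_p sc \<theta> (f ^ the_enat (c f))) (Im_p sc \<theta> (powC c F))"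
    using DS by (auto simp: S_def)
  have c4: "\<forall>g \<in> F. direct_sum_with (Im_p sc \<theta> (powC c F)) (F - {g})
            (\<lambda>f. Ker_p sc \<theta> (f ^ the_enat (c f))) (Im_p sc \<theta> (g ^ the_enat (c g)))"
  proof
    fix g assume "g \<in> F"
    then show "direct_sum_with (Im_p sc \<theta> (powC c F)) (F - {g})
            (\<lambda>f. Ker_p sc \<theta> (f ^ the_enat (c f))) (Im_p sc \<theta> (g ^ the_enat (c g)))"
      using DS[OF finF _ FS, of "{g}"] by (simp add: powC_single)
  qed
  show ?thesis using c1 c2 c2b c3 c4 by blast
qed

end
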